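(* Let $\alpha=m+n\gamma^{-1}\in\mathbb{Z}[\gamma]$ ($m,n\in\mathbb{Z}$) with $\alpha>0$, and let $Q_\alpha$ be the set of quads representing $\alpha$. Then $Q_\alpha$ is infinite and its elements have pairwise distinct sizes. Listing its elements in order of increasing size, the sizes form a sequence of consecutive integers, while the degrees, the bi-degrees (for the componentwise partial order on $\mathbb{N}^2$) and the second partial degrees are strictly increasing. The element of $Q_\alpha$ of smallest size has degree $|m|+|n|$ and bi-degree $(|m|,|n|)$.
   Context: Let $f\colon\mathbb{Z}\to\mathbb{Z}$ be defined by $f(0)=f(1)=1$, $f(i+2)=f(i+1)+f(i)$ for all $i\in\mathbb{Z}$; $\gamma=(1+\sqrt5)/2$; $\mathbb{Z}[\gamma]=\mathbb{Z}\oplus\mathbb{Z}\gamma^{-1}$. A quad is a tuple $q=(i;a,b,c)$ of non-negative integers with $a\ge1$. It represents $\alpha\in\mathbb{Z}[\gamma]$ if $\alpha=a\gamma^{-i}+b\gamma^{-i-1}+c\gamma^{-i-2}$. Its first and second partial degrees are $d_1(q)=af(i-2)+bf(i-1)+cf(i)$ and $d_2(q)=af(i-1)+bf(i)+cf(i+1)$, its degree is $d(q)=d_1(q)+d_2(q)$, its bi-degree is $(d_1(q),d_2(q))$, and its size is $a+b+c$. *)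

theory Defs
  imports Complex_Main "HOL-Number_Theory.Fib"
begin

text \<open>The Fibonacci-type function f on the integers with f 0 = f 1 = 1 and
  f (i+2) = f (i+1) + f i for all integers i, given explicitly
  (f i = fib (i+1) for i \<ge> 0, and f (-k) = (-1)^k * fib (k-1) for k \<ge> 1).\<close>

definition f :: "int \<Rightarrow> int" where
  "f i = (if i \<ge> 0 then int (fib (nat i + 1))
          else (-1) ^ nat (- i) * int (fib (nat (- i) - 1)))"

lemma f_0: "f 0 = 1" and f_1: "f 1 = 1"
  by (simp_all add: f_def)

lemma f_rec: "f (i + 2) = f (i + 1) + f i"
proof (cases "i \<ge> 0")
  case True
  then obtain n where n: "i = int n" by (metis nonneg_eq_int)
  have "nat (int n + 2) + 1 = Suc (Suc (n + 1))" by simp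
  moreover have "nat (int n + 1) + 1 = Suc (n + 1)" by simp
  ultimately show ?thesis using n by (simp add: f_def)
next
  case False
  define k where "k = nat (- i)"
  have k: "i = - int k" "k \<ge> 1" using False unfolding k_def by auto
  consider "k = 1" | "k = 2" | "k \<ge> 3" using k(2) by linarith
  then show ?thesis
  proof cases
    case 1 then show ?thesis using k by (simp add: f_def)
  next
    case 2 then show ?thesis using k by (simp add: f_def)
  next
    case 3
    then obtain j where j: "k = j + 3" by (metis add.commute le_Suc_ex)
    have e1: "i + 2 = - int (Suc j)" using k j by simp
    have e2: "i + 1 = - int (Suc (Suc j))" using k j by simp
    have e3: "i = - int (Suc (Suc (Suc j)))" using k j by simp
    have r: "fib (Suc (Suc j)) = fib (Suc j) + fib j" by simp
    have n1: "nat (int j + 1) = Suc j" by simp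
    have n2: "nat (int j + 2) = Suc (Suc j)" by simp
    have n3: "nat (int j + 3) = Suc (Suc (Suc j))" by simp
    have "f i = (-1) ^ j * - int (fib (Suc (Suc j)))"
      unfolding e3 f_def using n3 by (simp del: fib.simps)
    moreover have "f (i + 1) = (-1) ^ j * int (fib (Suc j))"
      unfolding e2 f_def using n2 by (simp del: fib.simps)
    moreover have "f (i + 2) = (-1) ^ j * - int (fib j)"
      unfolding e1 f_def using n1 by (simp del: fib.simps)
    ultimately show ?thesis using r by (simp add: algebra_simps)
  qed
qed

definition gamma :: real where "gamma = (1 + sqrt 5) / 2"

type_synonym quad = "nat \<times> nat \<times> nat \<times> nat"

definition is_quad :: "quad \<Rightarrow> bool" where
  "is_quad q = (case q of (i, a, b, c) \<Rightarrow> a \<ge> 1)"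

definition represents :: "quad \<Rightarrow> real \<Rightarrow> bool" where
  "represents q \<alpha> = (case q of (i, a, b, c) \<Rightarrow>
     \<alpha> = real a * gamma powi (- int i) + real b * gamma powi (- int i - 1)
         + real c * gamma powi (- int i - 2))"

definition Q :: "real \<Rightarrow> quad set" where
  "Q \<alpha> = {q. is_quad q \<and> represents q \<alpha>}"

definition d1 :: "quad \<Rightarrow> int" where
  "d1 q = (case q of (i, a, b, c) \<Rightarrow>
     int a * f (int i - 2) + int b * f (int i - 1) + int c * f (int i))"

definition d2 :: "quad \<Rightarrow> int" where
  "d2 q = (case q of (i, a, b, c) \<Rightarrow>
     int a * f (int i - 1) + int b * f (int i) + int c * f (int i + 1))"

definition deg :: "quad \<Rightarrow> int" where
  "deg q = d1 q + d2 q"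

definition qsize :: "quad \<Rightarrow> nat" where
  "qsize q = (case q of (i, a, b, c) \<Rightarrow> a + b + c)"

end

theory Submission imports Defs begin

definition xg :: real where "xg = gamma - 1"

lemma sqrt5_bounds: "2 < sqrt (5::real)" "sqrt (5::real) < 3"
  by (rule real_less_rsqrt, simp) (rule real_less_lsqrt, simp_all)

lemma gamma_sq: "gamma^2 = gamma + 1"
  unfolding gamma_def by (simp add: power2_eq_square algebra_simps)

lemma gamma_gt1: "gamma > 1" using sqrt5_bounds unfolding gamma_def by simp

lemma xg_gamma: "xg * gamma = 1"
  using gamma_sq unfolding xg_def by (simp add: power2_eq_square algebra_simps)

lemma xg_pos: "0 < xg" and xg_lt1: "xg < 1"
  using sqrt5_bounds unfolding xg_def gamma_def by simp_all

lemma xg_sq: "xg^2 = 1 - xg"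
  using gamma_sq unfolding xg_def by (simp add: power2_eq_square algebra_simps)

lemma inv_gamma: "inverse gamma = xg"
  using xg_gamma gamma_gt1 by (simp add: field_simps)

lemma gamma_powi: "gamma powi (- int i) = xg ^ i"
  by (simp add: power_int_minus inv_gamma[symmetric] power_inverse)

lemma gamma_powi1: "gamma powi (- int i - 1) = xg ^ Suc i"
proof -
  have "- int i - 1 = - int (Suc i)" by simp
  then show ?thesis using gamma_powi[of "Suc i"] by metis
qed

lemma gamma_powi2: "gamma powi (- int i - 2) = xg ^ Suc (Suc i)"
proof -
  have "- int i - 2 = - int (Suc (Suc i))" by simp
  then show ?thesis using gamma_powi[of "Suc (Suc i)"] by metis
qed


lemma dvd5: assumes "(s::int)^2 = 5 * k" shows "5 dvd s"
proof -
  have h: "(s mod 5)^2 mod 5 = 0" using assms by (metis mod_mult_self1_is_0 power_mod)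
  have "0 \<le> s mod 5" "s mod 5 < 5" by auto
  then have "s mod 5 = 0 \<or> s mod 5 = 1 \<or> s mod 5 = 2 \<or> s mod 5 = 3 \<or> s mod 5 = 4" by presburger
  then have "s mod 5 = 0" using h by (elim disjE) simp_all
  then show ?thesis by presburger
qed

lemma descent: "(s::int)^2 = 5 * k^2 \<Longrightarrow> k = 0"
proof (induction "nat \<bar>k\<bar>" arbitrary: s k rule: less_induct)
  case less
  show ?case
  proof (rule ccontr)
    assume k0: "k \<noteq> 0"
    have "5 dvd s" using less.prems by (rule dvd5)
    then obtain t where t: "s = 5 * t" by blast
    have "k^2 = 5 * t^2" using less.prems t by (simp add: power2_eq_square)
    have "5 dvd k" using \<open>k^2 = 5 * t^2\<close> by (rule dvd5)
    then obtain u where u: "k = 5 * u" by blast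
    have "t^2 = 5 * u^2" using \<open>k^2 = 5 * t^2\<close> u by (simp add: power2_eq_square)
    moreover have "nat \<bar>u\<bar> < nat \<bar>k\<bar>" using u k0 by auto
    ultimately have "u = 0" using less.hyps by blast
    with u k0 show False by simp
  qed
qed

lemma irr:
  fixes a b c d :: int
  assumes "real_of_int a + of_int b * xg = of_int c + of_int d * xg"
  shows "a = c \<and> b = d"
proof -
  have "b = d"
  proof (rule ccontr)
    assume ne: "b \<noteq> d"
    define k where "k = b - d"
    define r where "r = c - a"
    have e: "of_int k * xg = of_int r" using assms unfolding k_def r_def by (simp add: algebra_simps)
    have e2: "of_int k * sqrt 5 = of_int (2*r + k)"
      using e unfolding xg_def gamma_def by (simp add: algebra_simps)
    have "(of_int k * sqrt 5)^2 = of_int (5 * k^2)"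
      by (simp add: power_mult_distrib)
    then have "real_of_int ((2*r+k)^2) = of_int (5 * k^2)" using e2 by simp
    then have "(2*r+k)^2 = 5 * k^2" by (simp only: of_int_eq_iff)
    then have "k = 0" by (rule descent)
    with ne show False unfolding k_def by simp
  qed
  then show ?thesis using assms by simp
qed

lemma f_rec': "f j = f (j - 1) + f (j - 2)"
  using f_rec[of "j - 2"] by simp

lemma f_m1: "f (-1) = 0" and f_m2: "f (-2) = 1"
  by (simp_all add: f_def)

lemma f_pos: "j \<ge> 0 \<Longrightarrow> f j \<ge> 1"
  unfolding f_def using fib_neq_0_nat[of "nat j + 1"] by simp

lemma f_nonneg: "j \<ge> -2 \<Longrightarrow> f j \<ge> 0"
proof -
  assume "j \<ge> -2"
  then have "j \<ge> 0 \<or> j = -1 \<or> j = -2" by auto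
  then show ?thesis using f_pos f_m1 f_m2 by fastforce
qed

definition AA :: "int \<Rightarrow> int \<Rightarrow> nat \<Rightarrow> int" where
  "AA m n i = m * f (int i) + n * f (int i - 1)"
definition BB :: "int \<Rightarrow> int \<Rightarrow> nat \<Rightarrow> int" where
  "BB m n i = m * f (int i - 1) + n * f (int i - 2)"

lemma AA_Suc: "AA m n (Suc i) = AA m n i + BB m n i"
proof -
  have "f (int i + 1) = f (int i) + f (int i - 1)" using f_rec'[of "int i + 1"] by simp
  moreover have "f (int i) = f (int i - 1) + f (int i - 2)" by (rule f_rec')
  ultimately show ?thesis unfolding AA_def BB_def by (simp add: algebra_simps)
qed

lemma BB_Suc: "BB m n (Suc i) = AA m n i"
  unfolding AA_def BB_def by (simp add: algebra_simps)

lemma AA_0: "AA m n 0 = m" and BB_0: "BB m n 0 = n"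
  unfolding AA_def BB_def by (simp_all add: f_0 f_m1 f_m2)

lemma xpow: "xg^i = xg^(Suc i) + xg^(Suc (Suc i))"
proof -
  have e: "xg + xg^2 = 1" using xg_sq by simp
  have "xg^(Suc i) + xg^(Suc (Suc i)) = xg^i * (xg + xg^2)" by (simp add: algebra_simps power2_eq_square)
  then show ?thesis unfolding e by simp
qed

lemma level: "real_of_int m + of_int n * xg = of_int (AA m n i) * xg^i + of_int (BB m n i) * xg^(Suc i)"
proof (induction i)
  case 0
  then show ?case by (simp add: AA_0 BB_0)
next
  case (Suc i)
  have "of_int (AA m n (Suc i)) * xg^(Suc i) + of_int (BB m n (Suc i)) * xg^(Suc (Suc i))
     = of_int (AA m n i) * (xg^(Suc i) + xg^(Suc (Suc i))) + of_int (BB m n i) * xg^(Suc i)"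
    by (simp only: AA_Suc BB_Suc of_int_add) (simp add: algebra_simps)
  also have "\<dots> = of_int (AA m n i) * xg^i + of_int (BB m n i) * xg^(Suc i)"
    using xpow[of i] by simp
  finally show ?case using Suc by simp
qed

lemma charQ:
  assumes ax: "\<alpha> = real_of_int m + of_int n * xg"
  shows "(i,a,b,c) \<in> Q \<alpha> \<longleftrightarrow> a \<ge> 1 \<and> int a + int c = AA m n i \<and> int b - int c = BB m n i"
proof -
  define y where "y = xg^i"
  have y0: "y \<noteq> 0" unfolding y_def using xg_pos by simp
  have s1: "xg^(Suc i) = y * xg" unfolding y_def by simp
  have s2: "xg^(Suc (Suc i)) = y * (1 - xg)"
    using xpow[of i] unfolding y_def by (simp add: algebra_simps)
  have r1: "\<alpha> = y * (of_int (AA m n i) + of_int (BB m n i) * xg)"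
    using level[of m n i] ax s1 unfolding y_def by (simp add: algebra_simps)
  have r2: "real a * xg^i + real b * xg^(Suc i) + real c * xg^(Suc (Suc i))
        = y * (of_int (int a + int c) + of_int (int b - int c) * xg)"
    unfolding s1 s2 by (simp add: y_def algebra_simps)
  have "represents (i,a,b,c) \<alpha> \<longleftrightarrow>
        of_int (int a + int c) + of_int (int b - int c) * xg = real_of_int (AA m n i) + of_int (BB m n i) * xg"
    unfolding represents_def gamma_powi gamma_powi1 gamma_powi2 using r1 r2 y0 by auto
  also have "\<dots> \<longleftrightarrow> int a + int c = AA m n i \<and> int b - int c = BB m n i"
  proof
    assume h: "of_int (int a + int c) + of_int (int b - int c) * xg = real_of_int (AA m n i) + of_int (BB m n i) * xg"
    show "int a + int c = AA m n i \<and> int b - int c = BB m n i" using irr[OF h] .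
  next
    assume h: "int a + int c = AA m n i \<and> int b - int c = BB m n i"
    show "of_int (int a + int c) + of_int (int b - int c) * xg = real_of_int (AA m n i) + of_int (BB m n i) * xg"
      using h by (simp only:)
  qed
  finally show ?thesis unfolding Q_def is_quad_def by auto
qed


definition succ :: "quad \<Rightarrow> quad" where
  "succ q = (case q of (i, a, b, c) \<Rightarrow>
     if a \<ge> 2 then (i, a - 1, b + 1, c + 1) else (Suc i, b + 1, c + 1, 0))"

lemma succ_ge2: "a \<ge> 2 \<Longrightarrow> succ (i,a,b,c) = (i, a - 1, b + 1, c + 1)"
  unfolding succ_def by simp
lemma succ_lt2: "\<not> a \<ge> 2 \<Longrightarrow> succ (i,a,b,c) = (Suc i, b + 1, c + 1, 0)"
  unfolding succ_def by simp

lemma succ_Q: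
  assumes ax: "\<alpha> = real_of_int m + of_int n * xg" and q: "q \<in> Q \<alpha>"
  shows "succ q \<in> Q \<alpha>"
proof -
  obtain i a b c where qq: "q = (i,a,b,c)" by (cases q) auto
  have h: "a \<ge> 1" "int a + int c = AA m n i" "int b - int c = BB m n i"
    using q unfolding qq charQ[OF ax] by auto
  show ?thesis
  proof (cases "a \<ge> 2")
    case True
    then show ?thesis unfolding qq succ_ge2[OF True] charQ[OF ax] using h by auto
  next
    case False
    then have "a = 1" using h by simp
    then show ?thesis unfolding qq succ_lt2[OF False] charQ[OF ax] using h
      by (simp add: AA_Suc BB_Suc)
  qed
qed

lemma succ_props:
  assumes "is_quad q"
  shows "is_quad (succ q) \<and> qsize (succ q) = Suc (qsize q)
    \<and> d1 (succ q) = d1 q + 2 * f (int (fst q) - 1) \<and> d2 (succ q) = d2 q + 2 * f (int (fst q))"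
proof -
  obtain i a b c where qq: "q = (i,a,b,c)" by (cases q) auto
  have a1: "a \<ge> 1" using assms unfolding qq is_quad_def by simp
  have r0: "f (int i) = f (int i - 1) + f (int i - 2)" by (rule f_rec')
  have r1: "f (int i + 1) = f (int i) + f (int i - 1)" using f_rec'[of "int i + 1"] by simp
  show ?thesis
  proof (cases "a \<ge> 2")
    case True
    have ia: "int (a - 1) = int a - 1" using True by simp
    show ?thesis unfolding qq succ_ge2[OF True] using True r0 r1
      by (simp add: is_quad_def qsize_def d1_def d2_def ia algebra_simps)
  next
    case False
    then have a: "a = 1" using a1 by simp
    have e1: "int (Suc i) - 2 = int i - 1" "int (Suc i) - 1 = int i" "int (Suc i) = int i + 1" by simp_all
    show ?thesis unfolding qq succ_lt2[OF False] using r0 r1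
      by (simp add: is_quad_def qsize_def d1_def d2_def e1 a del: of_nat_Suc, simp add: algebra_simps)
  qed
qed

lemma iter_props:
  assumes "is_quad q"
  shows "is_quad ((succ^^k) q) \<and> qsize ((succ^^k) q) = qsize q + k
    \<and> d1 q \<le> d1 ((succ^^k) q) \<and> d2 q + 2 * int k \<le> d2 ((succ^^k) q)"
proof (induction k)
  case 0
  then show ?case using assms by simp
next
  case (Suc k)
  let ?p = "(succ^^k) q"
  have "is_quad ?p" using Suc by blast
  note sp = succ_props[OF this]
  have "f (int (fst ?p) - 1) \<ge> 0" by (rule f_nonneg) simp
  moreover have "f (int (fst ?p)) \<ge> 1" by (rule f_pos) simp
  ultimately show ?case using Suc sp by simp
qed

definition base :: "quad \<Rightarrow> bool" where
  "base q = (case q of (i, a, b, c) \<Rightarrow> b = 0 \<or> (i = 0 \<and> c = 0))"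

lemma pred_ex:
  assumes ax: "\<alpha> = real_of_int m + of_int n * xg" and q: "q \<in> Q \<alpha>" and nb: "\<not> base q"
  shows "\<exists>p\<in>Q \<alpha>. succ p = q"
proof -
  obtain i a b c where qq: "q = (i,a,b,c)" by (cases q) auto
  have h: "a \<ge> 1" "int a + int c = AA m n i" "int b - int c = BB m n i"
    using q unfolding qq charQ[OF ax] by auto
  have b1: "b \<ge> 1" and ic: "i \<noteq> 0 \<or> c \<noteq> 0" using nb unfolding qq base_def by auto
  show ?thesis
  proof (cases "c \<ge> 1")
    case True
    have "succ (i, a+1, b-1, c-1) = q" unfolding qq using True b1 h(1) by (simp add: succ_ge2)
    moreover have "(i, a+1, b-1, c-1) \<in> Q \<alpha>" unfolding charQ[OF ax] using h True b1 by auto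
    ultimately show ?thesis by blast
  next
    case False
    then have c0: "c = 0" by simp
    with ic obtain j where j: "i = Suc j" by (cases i) auto
    have "succ (j, 1, a-1, b-1) = q" unfolding qq using h b1 c0 j by (simp add: succ_lt2)
    moreover have "(j, 1, a-1, b-1) \<in> Q \<alpha>" unfolding charQ[OF ax]
      using h b1 c0 j by (auto simp: AA_Suc BB_Suc)
    ultimately show ?thesis by blast
  qed
qed

lemma AA_prop:
  assumes "AA m n k \<ge> 1" "AA m n (Suc k) \<ge> 1"
  shows "AA m n (k + d) \<ge> 1 \<and> AA m n (Suc (k + d)) \<ge> 1"
proof (induction d)
  case 0
  then show ?case using assms by simp
next
  case (Suc d)
  then show ?case by (simp add: AA_Suc[of m n "Suc (k+d)"] BB_Suc)
qed

lemma base_level: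
  assumes ax: "\<alpha> = real_of_int m + of_int n * xg" and q: "(i,a,b,c) \<in> Q \<alpha>" and bs: "base (i,a,b,c)"
  shows "AA m n i \<ge> 1 \<and> AA m n (Suc i) \<ge> 1"
proof -
  have h: "a \<ge> 1" "int a + int c = AA m n i" "int b - int c = BB m n i"
    using q unfolding charQ[OF ax] by auto
  then show ?thesis using bs unfolding base_def AA_Suc by auto
qed

lemma base_uniq_lt:
  assumes ax: "\<alpha> = real_of_int m + of_int n * xg"
    and q: "(i,a,b,c) \<in> Q \<alpha>" "base (i,a,b,c)"
    and q': "(j,a',b',c') \<in> Q \<alpha>" "base (j,a',b',c')"
    and lt: "i < j"
  shows False
proof -
  obtain k where j: "j = Suc k" using lt by (cases j) auto
  have "AA m n (i + (k - i)) \<ge> 1" using AA_prop base_level[OF ax q] by blast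
  then have A1: "AA m n k \<ge> 1" using lt j by simp
  have h: "a' \<ge> 1" "int a' + int c' = AA m n j" "int b' - int c' = BB m n j"
    using q'(1) unfolding charQ[OF ax] by auto
  have "b' = 0" using q'(2) j unfolding base_def by simp
  then have "BB m n j \<le> 0" using h by simp
  then show False using A1 j BB_Suc by simp
qed

lemma base_uniq:
  assumes ax: "\<alpha> = real_of_int m + of_int n * xg"
    and q: "q \<in> Q \<alpha>" "base q" and q': "q' \<in> Q \<alpha>" "base q'"
  shows "q = q'"
proof -
  obtain i a b c where qq: "q = (i,a,b,c)" by (cases q) auto
  obtain j a' b' c' where qq': "q' = (j,a',b',c')" by (cases q') auto
  have "\<not> i < j" using base_uniq_lt[OF ax] q q' qq qq' by blast
  moreover have "\<not> j < i" using base_uniq_lt[OF ax] q q' qq qq' by blast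
  ultimately have ij: "i = j" by simp
  have h: "a \<ge> 1" "int a + int c = AA m n i" "int b - int c = BB m n i"
    using q unfolding qq charQ[OF ax] by auto
  have h': "a' \<ge> 1" "int a' + int c' = AA m n i" "int b' - int c' = BB m n i"
    using q' unfolding qq' charQ[OF ax] ij by auto
  have "a = a' \<and> b = b' \<and> c = c'" using h h' q(2) q'(2) unfolding qq qq' base_def ij by auto
  then show ?thesis using qq qq' ij by simp
qed


lemma xp: "xg^k = (-1)^k * (of_int (f (int k - 2)) - of_int (f (int k - 1)) * xg)"
proof -
  have "xg^k = (-1)^k * (of_int (f (int k - 2)) - of_int (f (int k - 1)) * xg)
      \<and> xg^(Suc k) = (-1)^(Suc k) * (of_int (f (int (Suc k) - 2)) - of_int (f (int (Suc k) - 1)) * xg)"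
  proof (induction k)
    case 0
    then show ?case by (simp add: f_0 f_m1 f_m2)
  next
    case (Suc k)
    have r0: "f (int k) = f (int k - 1) + f (int k - 2)" by (rule f_rec')
    have r1: "f (1 + int k) = f (int k) + f (int k - 1)" using f_rec'[of "int k + 1"] by (simp add: add.commute)
    have es: "int (Suc k) - 2 = int k - 1" "int (Suc k) - 1 = int k"
      "int (Suc (Suc k)) - 2 = int k" "int (Suc (Suc k)) - 1 = int k + 1" by simp_all
    have e: "xg^(Suc (Suc k)) = xg^k - xg^(Suc k)" using xpow[of k] by simp
    note IH = Suc.IH[unfolded es]
    have IH1: "xg^k = (-1)^k * (of_int (f (int k - 2)) - of_int (f (int k - 1)) * xg)" using IH by blast
    have IH2: "xg^(Suc k) = (-1)^(Suc k) * (of_int (f (int k - 1)) - of_int (f (int k)) * xg)" using IH by blast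
    have "xg^(Suc (Suc k)) = (-1)^(Suc (Suc k)) * (of_int (f (int (Suc (Suc k)) - 2)) - of_int (f (int (Suc (Suc k)) - 1)) * xg)"
      unfolding es e IH1 IH2 using r0 r1 by (simp add: algebra_simps)
    then show ?case using IH2 unfolding es by blast
  qed
  then show ?thesis by blast
qed

lemma base_vals:
  assumes ax: "\<alpha> = real_of_int m + of_int n * xg" and q: "(i,a,b,c) \<in> Q \<alpha>" and bs: "base (i,a,b,c)"
  shows "d1 (i,a,b,c) = \<bar>m\<bar> \<and> d2 (i,a,b,c) = \<bar>n\<bar>"
proof (cases "b = 0")
  case True
  define M where "M = int a * f (int i - 2) + int c * f (int i)"
  define N where "N = int a * f (int i - 1) + int c * f (int i + 1)"
  have rep: "\<alpha> = real a * xg^i + real c * xg^(Suc (Suc i))"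
    using q True unfolding Q_def represents_def gamma_powi gamma_powi1 gamma_powi2 by simp
  have x2: "xg^(Suc (Suc i)) = (-1)^i * (of_int (f (int i)) - of_int (f (int i + 1)) * xg)"
    using xp[of "Suc (Suc i)"] by (simp add: add.commute)
  have x0: "xg^i = (-1)^i * (of_int (f (int i - 2)) - of_int (f (int i - 1)) * xg)" by (rule xp)
  have "\<alpha> = of_int ((-1)^i * M) + of_int (- ((-1)^i * N)) * xg"
    unfolding rep x2 x0 M_def N_def by (simp add: algebra_simps)
  then have "real_of_int m + of_int n * xg = of_int ((-1)^i * M) + of_int (- ((-1)^i * N)) * xg"
    using ax by simp
  then have mn: "m = (-1)^i * M \<and> n = - ((-1)^i * N)" by (rule irr)
  have M0: "M \<ge> 0" unfolding M_def using f_nonneg[of "int i - 2"] f_nonneg[of "int i"] by simp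
  have N0: "N \<ge> 0" unfolding N_def using f_nonneg[of "int i - 1"] f_nonneg[of "int i + 1"] by simp
  have "\<bar>m\<bar> = M" "\<bar>n\<bar> = N" using mn M0 N0 by (simp_all add: abs_mult power_abs)
  then show ?thesis using True unfolding d1_def d2_def M_def N_def by simp
next
  case False
  then have ic: "i = 0" "c = 0" using bs unfolding base_def by auto
  have rep: "\<alpha> = real a + real b * xg"
    using q ic unfolding Q_def represents_def gamma_powi gamma_powi1 gamma_powi2 by simp
  have "real_of_int m + of_int n * xg = of_int (int a) + of_int (int b) * xg" using ax rep by simp
  then have "m = int a \<and> n = int b" by (rule irr)
  then show ?thesis using ic unfolding d1_def d2_def by (simp add: f_0 f_m1 f_m2)
qed

lemma conjug: "of_int (AA m n i) - of_int (BB m n i) * gamma = (-xg)^i * (of_int m - of_int n * gamma)"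
proof (induction i)
  case 0
  then show ?case by (simp add: AA_0 BB_0)
next
  case (Suc i)
  define A where "A = real_of_int (AA m n i)"
  define B where "B = real_of_int (BB m n i)"
  have "(A + B) - A * gamma - (- xg * (A - B * gamma)) = A * (1 - gamma + xg) + B * (1 - xg * gamma)"
    by (simp add: algebra_simps)
  also have "\<dots> = 0" using xg_gamma unfolding xg_def by simp
  finally have "(A + B) - A * gamma = - xg * (A - B * gamma)" by simp
  then show ?case using Suc unfolding A_def B_def by (simp add: AA_Suc BB_Suc)
qed

lemma key:
  "xg^(Suc i) * (gamma + xg) * of_int (AA m n i)
   = (of_int m + of_int n * xg) + xg^(Suc (Suc i)) * (of_int (AA m n i) - of_int (BB m n i) * gamma)"
proof -
  define A where "A = real_of_int (AA m n i)"
  define B where "B = real_of_int (BB m n i)"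
  define y where "y = xg^i"
  have l: "real_of_int m + of_int n * xg = A * y + B * (xg * y)"
    using level[of m n i] unfolding A_def B_def y_def by simp
  have "xg * y * (gamma + xg) * A - (A * y + B * (xg * y) + xg * (xg * y) * (A - B * gamma))
      = (xg * gamma - 1) * (A * y + B * xg * y)" by (simp add: algebra_simps)
  also have "\<dots> = 0" using xg_gamma by simp
  finally show ?thesis unfolding l A_def[symmetric] B_def[symmetric] by (simp add: y_def)
qed

lemma AA_pos:
  assumes ax: "\<alpha> = real_of_int m + of_int n * xg" and pos: "\<alpha> > 0"
    and sm: "xg^(2*i+2) * \<bar>of_int m - of_int n * gamma\<bar> < \<alpha>"
  shows "AA m n i \<ge> 1"
proof -
  define t where "t = xg^(Suc (Suc i)) * (of_int (AA m n i) - of_int (BB m n i) * gamma)"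
  have "\<bar>t\<bar> = xg^(Suc (Suc i)) * xg^i * \<bar>of_int m - of_int n * gamma\<bar>"
    unfolding t_def conjug using xg_pos by (simp add: abs_mult power_abs)
  also have "xg^(Suc (Suc i)) * xg^i = xg^(2*i+2)" by (simp add: power_add[symmetric] mult_2)
  finally have "\<bar>t\<bar> < \<alpha>" using sm by simp
  then have "\<alpha> + t > 0" by linarith
  then have "xg^(Suc i) * (gamma + xg) * of_int (AA m n i) > 0"
    using key[of i m n] ax unfolding t_def by simp
  moreover have "xg^(Suc i) * (gamma + xg) > 0" using xg_pos gamma_gt1 by simp
  ultimately have "real_of_int (AA m n i) > 0" by (rule zero_less_mult_pos)
  then show ?thesis by simp
qed

lemma exists_Q:
  assumes ax: "\<alpha> = real_of_int m + of_int n * xg" and pos: "\<alpha> > 0"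
  shows "\<exists>q. q \<in> Q \<alpha>"
proof -
  define S where "S = \<bar>real_of_int m - of_int n * gamma\<bar>"
  obtain N where N: "(S + 1) / \<alpha> < gamma^N" using real_arch_pow[OF gamma_gt1] by blast
  then have "S + 1 < \<alpha> * gamma^N" using pos by (simp add: pos_divide_less_eq mult.commute)
  then have "xg^N * (S + 1) < xg^N * (\<alpha> * gamma^N)" using xg_pos by simp
  also have "xg^N * (\<alpha> * gamma^N) = \<alpha> * (xg * gamma)^N" by (simp add: power_mult_distrib)
  finally have lt: "xg^N * (S + 1) < \<alpha>" using xg_gamma by simp
  have S0: "S \<ge> 0" unfolding S_def by simp
  have gen: "xg^(2*i+2) * S < \<alpha>" if "N \<le> 2*i+2" for i
  proof -
    have "xg^(2*i+2) \<le> xg^N" using that xg_pos xg_lt1 by (intro power_decreasing) simp_all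
    then have "xg^(2*i+2) * S \<le> xg^N * S" using S0 by (simp add: mult_right_mono)
    also have "\<dots> < xg^N * (S + 1)" using xg_pos by simp
    finally show ?thesis using lt by simp
  qed
  have A1: "AA m n N \<ge> 1" using AA_pos[OF ax pos] gen[of N] unfolding S_def by simp
  have A2: "AA m n (Suc N) \<ge> 1" using AA_pos[OF ax pos] gen[of "Suc N"] unfolding S_def by simp
  have A2': "AA m n N + BB m n N \<ge> 1" using A2 by (simp add: AA_Suc)
  show ?thesis
  proof (cases "BB m n N \<le> 0")
    case True
    have "(N, nat (AA m n N + BB m n N), 0, nat (- BB m n N)) \<in> Q \<alpha>"
      unfolding charQ[OF ax] using True A2' by simp
    then show ?thesis by blast
  next
    case False
    have "(N, nat (AA m n N), nat (BB m n N), 0) \<in> Q \<alpha>"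
      unfolding charQ[OF ax] using False A1 by simp
    then show ?thesis by blast
  qed
qed

theorem mainTheorem16:
  fixes m n :: int and \<alpha> :: real
  assumes alpha_def: "\<alpha> = real_of_int m + real_of_int n * gamma powi (-1)"
    and pos: "\<alpha> > 0"
  shows "infinite (Q \<alpha>)
       \<and> inj_on qsize (Q \<alpha>)
       \<and> (\<exists>s0. qsize ` Q \<alpha> = {s0..})
       \<and> (\<forall>q\<in>Q \<alpha>. \<forall>q'\<in>Q \<alpha>. qsize q < qsize q' \<longrightarrow>
            deg q < deg q'
          \<and> (d1 q \<le> d1 q' \<and> d2 q \<le> d2 q' \<and> (d1 q, d2 q) \<noteq> (d1 q', d2 q'))
          \<and> d2 q < d2 q')
       \<and> (\<forall>q\<in>Q \<alpha>. (\<forall>q'\<in>Q \<alpha>. qsize q \<le> qsize q') \<longrightarrow>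
            deg q = \<bar>m\<bar> + \<bar>n\<bar> \<and> (d1 q, d2 q) = (\<bar>m\<bar>, \<bar>n\<bar>))"
proof -
  have ax: "\<alpha> = real_of_int m + of_int n * xg"
    using alpha_def by (simp add: power_int_minus1_right inv_gamma)
  obtain q1 where q1: "q1 \<in> Q \<alpha>" using exists_Q[OF ax pos] by blast
  define s0 where "s0 = (LEAST s. s \<in> qsize ` Q \<alpha>)"
  have "qsize q1 \<in> qsize ` Q \<alpha>" using q1 by blast
  then have "s0 \<in> qsize ` Q \<alpha>" unfolding s0_def by (rule LeastI)
  then obtain q0 where q0: "q0 \<in> Q \<alpha>" "qsize q0 = s0" by blast
  have s0le: "s0 \<le> qsize q" if "q \<in> Q \<alpha>" for q
    unfolding s0_def using that by (simp add: Least_le)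
  have quadQ: "is_quad q" if "q \<in> Q \<alpha>" for q using that unfolding Q_def by simp
  have q0b: "base q0"
  proof (rule ccontr)
    assume "\<not> base q0"
    then obtain p where p: "p \<in> Q \<alpha>" "succ p = q0" using pred_ex[OF ax q0(1)] by blast
    have "qsize q0 = Suc (qsize p)" using succ_props[OF quadQ[OF p(1)]] p(2) by simp
    then show False using s0le[OF p(1)] q0(2) by simp
  qed
  have reach_s: "\<forall>q. q \<in> Q \<alpha> \<longrightarrow> qsize q = s \<longrightarrow> q = (succ^^(s - s0)) q0" for s
  proof (induction s rule: less_induct)
    case (less s)
    show ?case
    proof (intro allI impI)
      fix q assume q: "q \<in> Q \<alpha>" "qsize q = s"
      show "q = (succ^^(s - s0)) q0"
      proof (cases "base q")
        case True
        then have "q = q0" using base_uniq[OF ax q(1) True q0(1) q0b] by simp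
        then show ?thesis using q q0 by simp
      next
        case False
        then obtain p where p: "p \<in> Q \<alpha>" "succ p = q" using pred_ex[OF ax q(1)] by blast
        have sp: "s = Suc (qsize p)" using succ_props[OF quadQ[OF p(1)]] p(2) q(2) by simp
        have "qsize p < s" using sp by simp
        then have "p = (succ^^(qsize p - s0)) q0" using less.IH[of "qsize p"] p(1) by blast
        moreover have "s - s0 = Suc (qsize p - s0)" using sp s0le[OF p(1)] by simp
        ultimately show ?thesis using p(2) by simp
      qed
    qed
  qed
  have reach: "q = (succ^^(qsize q - s0)) q0" if "q \<in> Q \<alpha>" for q
    using reach_s[of "qsize q"] that by blast
  have inQ: "(succ^^k) q0 \<in> Q \<alpha>" for k
    by (induction k) (simp_all add: q0(1) succ_Q[OF ax])
  have szk: "qsize ((succ^^k) q0) = s0 + k" for k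
    using iter_props[OF quadQ[OF q0(1)], of k] q0(2) by simp
  have inj: "inj_on qsize (Q \<alpha>)"
  proof (rule inj_onI)
    fix q q' assume a: "q \<in> Q \<alpha>" "q' \<in> Q \<alpha>" and eq: "qsize q = qsize q'"
    have "q = (succ^^(qsize q - s0)) q0" by (rule reach[OF a(1)])
    then have "q = (succ^^(qsize q' - s0)) q0" unfolding eq .
    then show "q = q'" using reach[OF a(2)] by (rule trans[OF _ sym])
  qed
  have img: "qsize ` Q \<alpha> = {s0..}"
  proof
    show "qsize ` Q \<alpha> \<subseteq> {s0..}" using s0le by auto
    show "{s0..} \<subseteq> qsize ` Q \<alpha>"
    proof
      fix s assume "s \<in> {s0..}"
      then have "s = qsize ((succ^^(s - s0)) q0)" using szk by simp
      then show "s \<in> qsize ` Q \<alpha>" using inQ by blast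
    qed
  qed
  have inf: "infinite (Q \<alpha>)"
  proof
    assume "finite (Q \<alpha>)"
    then have "finite {s0..}" using img by (metis finite_imageI)
    then show False using infinite_Ici by blast
  qed
  have mono: "deg q < deg q' \<and> (d1 q \<le> d1 q' \<and> d2 q \<le> d2 q' \<and> (d1 q, d2 q) \<noteq> (d1 q', d2 q')) \<and> d2 q < d2 q'"
    if q: "q \<in> Q \<alpha>" and q': "q' \<in> Q \<alpha>" and lt: "qsize q < qsize q'" for q q'
  proof -
    define k where "k = qsize q' - qsize q"
    have k1: "k \<ge> 1" unfolding k_def using lt by simp
    have ar: "k + (qsize q - s0) = qsize q' - s0" using s0le[OF q] lt unfolding k_def by linarith
    have "q' = (succ^^(k + (qsize q - s0))) q0"
      unfolding ar using reach[OF q'] .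
    also have "\<dots> = (succ^^k) ((succ^^(qsize q - s0)) q0)" by (simp add: funpow_add)
    also have "\<dots> = (succ^^k) q" using arg_cong[OF reach[OF q, symmetric], of "succ^^k"] .
    finally have qq: "q' = (succ^^k) q" .
    have "d1 q \<le> d1 q'" "d2 q + 2 * int k \<le> d2 q'"
      using iter_props[OF quadQ[OF q], of k] qq by simp_all
    then show ?thesis using k1 unfolding deg_def by auto
  qed
  have minimal: "deg q = \<bar>m\<bar> + \<bar>n\<bar> \<and> (d1 q, d2 q) = (\<bar>m\<bar>, \<bar>n\<bar>)"
    if q: "q \<in> Q \<alpha>" and mn: "\<forall>q'\<in>Q \<alpha>. qsize q \<le> qsize q'" for q
  proof -
    have "qsize q \<le> qsize q0" using mn q0(1) by blast
    then have "qsize q = s0" using q0(2) s0le[OF q] by simp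
    then have "q = q0" using reach[OF q] by (metis diff_self_eq_0 funpow_0)
    then have qb: "q \<in> Q \<alpha>" "base q" using q q0b by simp_all
    obtain i a b c where qq: "q = (i,a,b,c)" by (cases q) auto
    have "d1 q = \<bar>m\<bar> \<and> d2 q = \<bar>n\<bar>" using base_vals[OF ax] qb unfolding qq by blast
    then show ?thesis unfolding deg_def by simp
  qed
  show ?thesis
  proof (intro conjI)
    show "infinite (Q \<alpha>)" by (rule inf)
    show "inj_on qsize (Q \<alpha>)" by (rule inj)
    show "\<exists>s0. qsize ` Q \<alpha> = {s0..}" using img by blast
    show "\<forall>q\<in>Q \<alpha>. \<forall>q'\<in>Q \<alpha>. qsize q < qsize q' \<longrightarrow>
            deg q < deg q'
          \<and> (d1 q \<le> d1 q' \<and> d2 q \<le> d2 q' \<and> (d1 q, d2 q) \<noteq> (d1 q', d2 q'))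
          \<and> d2 q < d2 q'"
    proof (intro ballI impI)
      fix q q' assume "q \<in> Q \<alpha>" "q' \<in> Q \<alpha>" "qsize q < qsize q'"
      then show "deg q < deg q'
          \<and> (d1 q \<le> d1 q' \<and> d2 q \<le> d2 q' \<and> (d1 q, d2 q) \<noteq> (d1 q', d2 q'))
          \<and> d2 q < d2 q'" by (rule mono)
    qed
    show "\<forall>q\<in>Q \<alpha>. (\<forall>q'\<in>Q \<alpha>. qsize q \<le> qsize q') \<longrightarrow>
            deg q = \<bar>m\<bar> + \<bar>n\<bar> \<and> (d1 q, d2 q) = (\<bar>m\<bar>, \<bar>n\<bar>)"
    proof (intro ballI impI)
      fix q assume "q \<in> Q \<alpha>" "\<forall>q'\<in>Q \<alpha>. qsize q \<le> qsize q'"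
      then show "deg q = \<bar>m\<bar> + \<bar>n\<bar> \<and> (d1 q, d2 q) = (\<bar>m\<bar>, \<bar>n\<bar>)" by (rule minimal)
    qed
  qed
qed

end
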